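(* For every index coding instance $\mathcal{I}=\{(i\mid A_i):i\in[m]\}$, $\beta_{\text{P-UMCD}}(\mathcal{I})\le\beta_{\text{PCC}}(\mathcal{I})$.
   Context: For $M\subseteq[m]$, the subinstance $M$ has receivers $M$ and side information $A_i\cap M$; $\beta_{\text{MDS}}(M)=|M|-\min_{i\in M}|M\cap A_i|$. $\beta_{\text{PCC}}(\mathcal{I})=\min\sum_{j}\beta_{\text{MDS}}(M_j)$ and $\beta_{\text{P-UMCD}}(\mathcal{I})=\min\sum_j\beta_{\text{UMCD}}(M_j)$, both minima over partitions of $[m]$ into pairwise disjoint nonempty sets $M_1,\dots,M_n$. UMCD algorithm on a (sub)instance with receiver set $V$: $B_i=V\setminus(A_i\cup\{i\})$ (side information taken within $V$); for a $0/1$ matrix $\boldsymbol{G}$, $\boldsymbol{G}_{[k]}^L$ is the submatrix of the first $k$ rows and columns $L$, and $\mathrm{mcm}$ is the maximum number of $1$-entries in distinct rows and columns (0 if no columns); $N=V$, $k=0$; while $N\ne\emptyset$: $k\leftarrow k+1$; pick $w\in N$ minimizing $|A_w|$ (arbitrary tie-breaking); row $k$ of $\boldsymbol{G}$ is the indicator of $\{w\}\cup A_w$; remove $w$; remove every $i\in N$ with $\mathrm{mcm}(\boldsymbol{G}_{[k]}^{\{i\}\cup B_i})=\mathrm{mcm}(\boldsymbol{G}_{[k]}^{B_i})+1$; output $\beta_{\text{UMCD}}=k$ (a fixed execution for each subinstance). *)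

theory Defs
  imports Main
begin

text \<open>Index coding instance: receivers [m] = {1..m}, side information A i.
  All notions below are relative to a (sub)instance with receiver set V,
  whose side information is A i \<inter> V.\<close>

definition beta_mds :: "(nat \<Rightarrow> nat set) \<Rightarrow> nat set \<Rightarrow> nat" where
  "beta_mds A M = card M - (MIN i\<in>M. card (M \<inter> A i))"

definition is_partition :: "nat set \<Rightarrow> nat set set \<Rightarrow> bool" where
  "is_partition S P \<longleftrightarrow> finite P \<and> (\<forall>M\<in>P. M \<noteq> {}) \<and>
     (\<forall>M1\<in>P. \<forall>M2\<in>P. M1 \<noteq> M2 \<longrightarrow> M1 \<inter> M2 = {}) \<and> \<Union>P = S"

definition beta_pcc :: "nat \<Rightarrow> (nat \<Rightarrow> nat set) \<Rightarrow> nat" where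
  "beta_pcc m A = Min {(\<Sum>M\<in>P. beta_mds A M) | P. is_partition {1..m} P}"

text \<open>0/1 matrix with columns indexed by receivers, given as a list of rows;
  row r has a 1 in column c iff c \<in> rows ! r.
  mcm of the submatrix of the first k rows with columns L (maximum number of
  1-entries in distinct rows and distinct columns).\<close>
definition mcm :: "nat set list \<Rightarrow> nat \<Rightarrow> nat set \<Rightarrow> nat" where
  "mcm rows k L = Max {card P | P. P \<subseteq> {0..<k} \<times> L \<and> (\<forall>(r,c)\<in>P. c \<in> rows ! r)
        \<and> inj_on fst P \<and> inj_on snd P}"

text \<open>Executions of the UMCD algorithm on the subinstance with receiver set V:
  umcd_exec A V N rows means the state (remaining set N, rows of G so far) is reachable.
  Tie-breaking is arbitrary, hence a relation.\<close>
inductive umcd_exec :: "(nat \<Rightarrow> nat set) \<Rightarrow> nat set \<Rightarrow> nat set \<Rightarrow> nat set list \<Rightarrow> bool"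
  for A :: "nat \<Rightarrow> nat set" and V :: "nat set" where
  init: "umcd_exec A V V []"
| step: "\<lbrakk> umcd_exec A V N rows; N \<noteq> {}; w \<in> N;
           \<forall>u\<in>N. card (A w \<inter> V) \<le> card (A u \<inter> V);
           rows' = rows @ [insert w (A w \<inter> V)];
           N' = {i \<in> N - {w}. \<not> (mcm rows' (length rows') (insert i (V - (A i \<union> {i})))
                                  = mcm rows' (length rows') (V - (A i \<union> {i})) + 1)} \<rbrakk>
         \<Longrightarrow> umcd_exec A V N' rows'"

definition umcd_output :: "(nat \<Rightarrow> nat set) \<Rightarrow> nat set \<Rightarrow> nat \<Rightarrow> bool" where
  "umcd_output A V k \<longleftrightarrow> (\<exists>rows. umcd_exec A V {} rows \<and> length rows = k)"

text \<open>P-UMCD, where f fixes the execution (its output) chosen for each subinstance.\<close>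
definition beta_pumcd :: "nat \<Rightarrow> (nat set \<Rightarrow> nat) \<Rightarrow> nat" where
  "beta_pumcd m f = Min {(\<Sum>M\<in>P. f M) | P. is_partition {1..m} P}"

end

theory Submission
  imports Defs
begin


lemma hall:
  fixes R :: "'a set" and E :: "('a \<times> 'b) set"
  assumes "finite R" "finite E" "\<forall>Y\<subseteq>R. card Y \<le> card (E``Y)"
  shows "\<exists>f. inj_on f R \<and> (\<forall>r\<in>R. (r, f r) \<in> E)"
  using assms
proof (induction "card R" arbitrary: R E rule: less_induct)
  case less
  note fin = less.prems(1,2) and H = less.prems(3)
  have finimg: "finite (E``Y)" for Y using fin(2)
    by (metis finite_Image)
  show ?case
  proof (cases "R = {}")
    case True then show ?thesis by auto
  next
    case Rne: False
    show ?thesis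
    proof (cases "\<exists>Y. Y \<noteq> {} \<and> Y \<subset> R \<and> card (E``Y) = card Y")
      case False
      obtain r0 where r0: "r0 \<in> R" using Rne by auto
      have "card {r0} \<le> card (E``{r0})" using H r0 by auto
      then have "E``{r0} \<noteq> {}" by auto
      then obtain c where c: "(r0, c) \<in> E" by auto
      define R' where "R' = R - {r0}"
      define E' where "E' = {p\<in>E. snd p \<noteq> c}"
      have lt: "card R' < card R" using r0 fin(1) R'_def by (metis card_Diff1_less)
      have H': "\<forall>Y\<subseteq>R'. card Y \<le> card (E'``Y)"
      proof (intro allI impI)
        fix Y assume Y: "Y \<subseteq> R'"
        show "card Y \<le> card (E'``Y)"
        proof (cases "Y = {}")
          case True then show ?thesis by simp
        next
          case False
          have sub: "Y \<subset> R" using Y r0 R'_def by auto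
          have "card Y \<le> card (E``Y)" using H sub by auto
          moreover have "card (E``Y) \<noteq> card Y" using \<open>\<not> (\<exists>Y. _)\<close> False sub by blast
          ultimately have a: "card Y + 1 \<le> card (E``Y)" by simp
          have "E``Y - {c} \<subseteq> E'``Y" unfolding E'_def by auto
          moreover have "card (E``Y - {c}) \<ge> card (E``Y) - 1"
            by (simp add: card_Diff_singleton_if finimg)
          ultimately have "card (E'``Y) \<ge> card (E``Y) - 1"
            proof -
            have "finite E'" using fin(2) E'_def by auto
            then have "finite (E'``Y)" by (metis finite_Image)
            then show ?thesis using \<open>E``Y - {c} \<subseteq> E'``Y\<close> \<open>card (E``Y - {c}) \<ge> card (E``Y) - 1\<close>
              by (meson card_mono le_trans)
          qed
          then show ?thesis using a by simp
        qed
      qed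
      have "finite R'" "finite E'" using fin R'_def E'_def by auto
      then obtain f where f: "inj_on f R'" "\<forall>r\<in>R'. (r, f r) \<in> E'"
        using less.hyps[OF lt _ _ H'] by blast
      define g where "g = f(r0 := c)"
      have "inj_on g R"
      proof -
        have "inj_on g R'" using f(1) unfolding g_def R'_def inj_on_def by auto
        moreover have "g r0 \<notin> g ` R'"
        proof
          assume "g r0 \<in> g ` R'"
          then obtain r where r: "r \<in> R'" "g r = c" using g_def by auto
          then have "r \<noteq> r0" using R'_def by auto
          then have "f r = c" using r g_def by simp
          moreover have "snd (r, f r) \<noteq> c" using f(2) r(1) E'_def by blast
          ultimately show False by simp
        qed
        moreover have "R' - {r0} = R'" using R'_def by auto
        ultimately have "inj_on g (insert r0 R')" by (simp only: inj_on_insert) simp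
        moreover have "insert r0 R' = R" using r0 R'_def by auto
        ultimately show ?thesis by simp
      qed
      moreover have "\<forall>r\<in>R. (r, g r) \<in> E" using f(2) c unfolding g_def R'_def E'_def by auto
      ultimately show ?thesis by blast
    next
      case True
      then obtain Y0 where Y0: "Y0 \<noteq> {}" "Y0 \<subset> R" "card (E``Y0) = card Y0" by blast
      have lt1: "card Y0 < card R" using Y0 fin(1) by (simp add: psubset_card_mono)
      have H1: "\<forall>Y\<subseteq>Y0. card Y \<le> card (E``Y)" using H Y0 by auto
      obtain f1 where f1: "inj_on f1 Y0" "\<forall>r\<in>Y0. (r, f1 r) \<in> E"
        using less.hyps[OF lt1 _ fin(2) H1] Y0 fin(1) by (meson finite_subset psubset_imp_subset)
      define R2 where "R2 = R - Y0"
      define E2 where "E2 = {p\<in>E. snd p \<notin> E``Y0}"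
      have "R2 \<subset> R" using Y0 R2_def by blast
      then have lt2: "card R2 < card R" using fin(1) by (simp add: psubset_card_mono)
      have H2: "\<forall>Z\<subseteq>R2. card Z \<le> card (E2``Z)"
      proof (intro allI impI)
        fix Z assume Z: "Z \<subseteq> R2"
        have "Z \<union> Y0 \<subseteq> R" using Z Y0 R2_def by auto
        then have "card (Z \<union> Y0) \<le> card (E``(Z \<union> Y0))" using H by auto
        moreover have "card (Z \<union> Y0) = card Z + card Y0"
          using Z R2_def fin(1) Y0 by (subst card_Un_disjoint) (auto intro: finite_subset)
        moreover have "E2``Z = E``(Z \<union> Y0) - E``Y0" unfolding E2_def by (auto simp: Image_iff)
        moreover have "card (E``(Z \<union> Y0) - E``Y0) = card (E``(Z \<union> Y0)) - card (E``Y0)"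
          by (rule card_Diff_subset) (auto simp: finimg)
        ultimately show "card Z \<le> card (E2``Z)" using Y0(3) by simp
      qed
      have "finite R2" "finite E2" using fin R2_def E2_def by auto
      then obtain f2 where f2: "inj_on f2 R2" "\<forall>r\<in>R2. (r, f2 r) \<in> E2"
        using less.hyps[OF lt2 _ _ H2] by blast
      define g where "g = (\<lambda>r. if r \<in> Y0 then f1 r else f2 r)"
      have "inj_on g R"
        unfolding inj_on_def
      proof (intro ballI impI)
        fix x y assume xy: "x \<in> R" "y \<in> R" "g x = g y"
        show "x = y"
        proof (cases "x \<in> Y0"; cases "y \<in> Y0")
          assume "x \<in> Y0" "y \<in> Y0" then show ?thesis using xy f1(1) g_def by (auto dest: inj_onD)
        next
          assume a: "x \<in> Y0" "y \<notin> Y0"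
          then have "g x \<in> E``Y0" using f1 g_def by (auto simp: Image_iff)
          moreover have "f2 y \<notin> E``Y0" using f2(2) a(2) xy(2) R2_def E2_def by auto
          moreover have "g y = f2 y" using a g_def by simp
          ultimately show ?thesis using xy by metis
        next
          assume a: "x \<notin> Y0" "y \<in> Y0"
          then have "g y \<in> E``Y0" using f1 g_def by (auto simp: Image_iff)
          moreover have "f2 x \<notin> E``Y0" using f2(2) a(1) xy(1) R2_def E2_def by auto
          moreover have "g x = f2 x" using a g_def by simp
          ultimately show ?thesis using xy by metis
        next
          assume "x \<notin> Y0" "y \<notin> Y0" then show ?thesis using xy f2(1) g_def R2_def by (auto dest: inj_onD)
        qed
      qed
      moreover have "\<forall>r\<in>R. (r, g r) \<in> E" using f1(2) f2(2) unfolding g_def R2_def E2_def by auto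
      ultimately show ?thesis by blast
    qed
  qed
qed



definition NB :: "nat set list \<Rightarrow> nat set \<Rightarrow> nat set" where
  "NB rs Y = (\<Union>j\<in>Y. rs!j)"

definition dff :: "nat set list \<Rightarrow> nat \<Rightarrow> nat set \<Rightarrow> nat set \<Rightarrow> nat" where
  "dff rs k L Y = k - card Y + card (NB rs Y \<inter> L)"

definition ismatch :: "nat set list \<Rightarrow> nat \<Rightarrow> nat set \<Rightarrow> (nat \<times> nat) set \<Rightarrow> bool" where
  "ismatch rs k L P \<longleftrightarrow> P \<subseteq> {0..<k} \<times> L \<and> (\<forall>(r,c)\<in>P. c \<in> rs ! r) \<and> inj_on fst P \<and> inj_on snd P"

lemma mcm_alt: "mcm rs k L = Max {card P | P. ismatch rs k L P}"
  unfolding mcm_def ismatch_def by simp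

lemma mcm_set_fin:
  assumes "finite L"
  shows "finite {card P | P. ismatch rs k L P}" "{card P | P. ismatch rs k L P} \<noteq> {}"
proof -
  have "{card P | P. ismatch rs k L P} \<subseteq> card ` Pow ({0..<k} \<times> L)"
    unfolding ismatch_def by auto
  then show "finite {card P | P. ismatch rs k L P}" using assms
    by (meson finite_Pow_iff finite_SigmaI finite_atLeastLessThan finite_imageI finite_subset)
  have "ismatch rs k L {}" unfolding ismatch_def by auto
  then show "{card P | P. ismatch rs k L P} \<noteq> {}" by blast
qed

lemma mcm_lb: "finite L \<Longrightarrow> ismatch rs k L P \<Longrightarrow> card P \<le> mcm rs k L"
  unfolding mcm_alt using mcm_set_fin by (intro Max_ge) auto

lemma mcm_ub: "finite L \<Longrightarrow> (\<And>P. ismatch rs k L P \<Longrightarrow> card P \<le> b) \<Longrightarrow> mcm rs k L \<le> b"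
  unfolding mcm_alt using mcm_set_fin by (subst Max_le_iff) auto

lemma mcm_le_dff:
  assumes L: "finite L" and Y: "Y \<subseteq> {0..<k}"
  shows "mcm rs k L \<le> dff rs k L Y"
proof (rule mcm_ub[OF L])
  fix P assume P: "ismatch rs k L P"
  define P1 where "P1 = {p\<in>P. fst p \<in> Y}"
  define P2 where "P2 = {p\<in>P. fst p \<notin> Y}"
  have finP: "finite P" using P L unfolding ismatch_def
    by (meson finite_SigmaI finite_atLeastLessThan finite_subset)
  have "P = P1 \<union> P2" "P1 \<inter> P2 = {}" unfolding P1_def P2_def by auto
  then have cP: "card P = card P1 + card P2" using finP
    by (metis card_Un_disjoint finite_Un)
  have "card P1 = card (snd ` P1)"
    using P unfolding ismatch_def P1_def by (metis (no_types, lifting) card_image inj_on_subset mem_Collect_eq subsetI)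
  also have "snd ` P1 \<subseteq> NB rs Y \<inter> L"
    using P unfolding ismatch_def P1_def NB_def by fastforce
  then have "card (snd ` P1) \<le> card (NB rs Y \<inter> L)" using L by (simp add: card_mono)
  finally have c1: "card P1 \<le> card (NB rs Y \<inter> L)" .
  have "card P2 = card (fst ` P2)"
    using P unfolding ismatch_def P2_def by (metis (no_types, lifting) card_image inj_on_subset mem_Collect_eq subsetI)
  also have "fst ` P2 \<subseteq> {0..<k} - Y"
    using P unfolding ismatch_def P2_def by fastforce
  then have "card (fst ` P2) \<le> card ({0..<k} - Y)" by (simp add: card_mono)
  also have "card ({0..<k} - Y) = k - card Y" using Y by (simp add: card_Diff_subset finite_subset)
  finally have c2: "card P2 \<le> k - card Y" .
  show "card P \<le> dff rs k L Y" unfolding dff_def using cP c1 c2 by simp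
qed



lemma konig:
  assumes L: "finite L"
  shows "\<exists>Y\<subseteq>{0..<k}. dff rs k L Y \<le> mcm rs k L"
proof -
  define E where "E = {(r,c). r < k \<and> c \<in> L \<and> c \<in> rs!r}"
  have "E \<subseteq> {0..<k} \<times> L" unfolding E_def by auto
  then have finE: "finite E" using L by (meson finite_SigmaI finite_atLeastLessThan finite_subset)
  have EY: "E``Y = NB rs Y \<inter> L" if "Y \<subseteq> {0..<k}" for Y
    using that unfolding E_def NB_def by fastforce
  define D where "D = dff rs k L ` Pow {0..<k}"
  have "finite D" "D \<noteq> {}" unfolding D_def by auto
  then have "Min D \<in> D" by simp
  then obtain Y where Y: "Y \<subseteq> {0..<k}" "dff rs k L Y = Min D" unfolding D_def by auto
  have Ymin: "dff rs k L Y \<le> dff rs k L Y'" if "Y' \<subseteq> {0..<k}" for Y'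
    using Y(2) \<open>finite D\<close> that unfolding D_def by simp
  have finY: "finite Y" using Y(1) finite_subset by blast
  have cYk: "card Y \<le> k" using Y(1) by (metis card_atLeastLessThan card_mono finite_atLeastLessThan diff_zero)
  have finEI: "finite (E``X)" for X using finE by (metis finite_Image)
  \<comment> \<open>part 1: match columns E``Y into rows Y\<close>
  define E1 where "E1 = {(c,r). (r,c) \<in> E \<and> r \<in> Y}"
  have "E1 \<subseteq> E\<inverse>" unfolding E1_def by auto
  then have finE1: "finite E1" using finE by (meson finite_converse finite_subset)
  have H1: "\<forall>Z\<subseteq>E``Y. card Z \<le> card (E1``Z)"
  proof (intro allI impI)
    fix Z assume Z: "Z \<subseteq> E``Y"
    define Y' where "Y' = Y - E1``Z"
    have sub1: "E1``Z \<subseteq> Y" unfolding E1_def by auto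
    have "finite (E1``Z)" using finE1 by (metis finite_Image)
    have a: "card Y' + card (E1``Z) = card Y" unfolding Y'_def using sub1 finY
      by (metis card_Diff_subset card_mono le_add_diff_inverse2 \<open>finite (E1``Z)\<close>)
    have "E``Y' \<subseteq> E``Y - Z" unfolding Y'_def E1_def by auto
    then have "card (E``Y') \<le> card (E``Y - Z)" by (simp add: card_mono finEI)
    also have "card (E``Y - Z) = card (E``Y) - card Z" using Z by (simp add: card_Diff_subset finite_subset finEI)
    finally have b0: "card (E``Y') \<le> card (E``Y) - card Z" .
    have cZ: "card Z \<le> card (E``Y)" by (rule card_mono[OF finEI Z])
    have b: "card (E``Y') + card Z \<le> card (E``Y)" using b0 cZ by simp
    have "Y' \<subseteq> {0..<k}" using Y(1) Y'_def by auto
    then have "dff rs k L Y \<le> dff rs k L Y'" by (rule Ymin)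
    moreover have "card Y' \<le> k" using a cYk by simp
    ultimately have "card (E``Y) + card Y' \<le> card (E``Y') + card Y"
      unfolding dff_def using EY[OF Y(1)] EY[OF \<open>Y' \<subseteq> {0..<k}\<close>] cYk by simp
    then show "card Z \<le> card (E1``Z)" using a b by simp
  qed
  obtain g where g: "inj_on g (E``Y)" "\<forall>c\<in>E``Y. (c, g c) \<in> E1"
    using hall[OF finEI finE1 H1] by blast
  \<comment> \<open>part 2: match rows outside Y into columns outside E``Y\<close>
  define R2 where "R2 = {0..<k} - Y"
  define E2 where "E2 = {p\<in>E. snd p \<notin> E``Y}"
  have finE2: "finite E2" using finE E2_def by auto
  have H2: "\<forall>Z\<subseteq>R2. card Z \<le> card (E2``Z)"
  proof (intro allI impI)
    fix Z assume Z: "Z \<subseteq> R2"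
    have ZY: "Z \<union> Y \<subseteq> {0..<k}" using Z Y(1) R2_def by auto
    have cu: "card (Z \<union> Y) = card Z + card Y"
      using Z R2_def finY by (subst card_Un_disjoint) (auto intro: finite_subset)
    have "dff rs k L Y \<le> dff rs k L (Z \<union> Y)" by (rule Ymin[OF ZY])
    moreover have "card (Z \<union> Y) \<le> k" using ZY by (metis card_atLeastLessThan card_mono finite_atLeastLessThan diff_zero)
    ultimately have "card (E``Y) + card Z \<le> card (E``(Z \<union> Y))"
      unfolding dff_def using EY[OF Y(1)] EY[OF ZY] cu by simp
    moreover have "E2``Z = E``(Z \<union> Y) - E``Y" unfolding E2_def by (auto simp: Image_iff)
    moreover have "card (E``(Z \<union> Y) - E``Y) = card (E``(Z \<union> Y)) - card (E``Y)"
      by (rule card_Diff_subset) (auto simp: finEI)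
    ultimately show "card Z \<le> card (E2``Z)" by simp
  qed
  have "finite R2" unfolding R2_def by simp
  obtain f where f: "inj_on f R2" "\<forall>r\<in>R2. (r, f r) \<in> E2"
    using hall[OF \<open>finite R2\<close> finE2 H2] by blast
  define P1 where "P1 = (\<lambda>c. (g c, c)) ` (E``Y)"
  define P2 where "P2 = (\<lambda>r. (r, f r)) ` R2"
  define P where "P = P1 \<union> P2"
  have cP1: "card P1 = card (E``Y)" unfolding P1_def
    by (rule card_image) (auto simp: inj_on_def)
  have cP2: "card P2 = card R2" unfolding P2_def
    by (rule card_image) (auto simp: inj_on_def)
  have disj: "P1 \<inter> P2 = {}"
  proof (rule ccontr)
    assume "P1 \<inter> P2 \<noteq> {}"
    then obtain p where p: "p \<in> P1" "p \<in> P2" by blast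
    obtain c where c: "c \<in> E``Y" "p = (g c, c)" using p(1) unfolding P1_def by blast
    obtain r where r: "r \<in> R2" "p = (r, f r)" using p(2) unfolding P2_def by blast
    have cr: "c \<in> E``Y" "r \<in> R2" "(g c, c) = (r, f r)" using c r by auto
    then have "f r \<notin> E``Y" using f(2) unfolding E2_def by auto
    then show False using cr by auto
  qed
  have finP1: "finite P1" "finite P2" unfolding P1_def P2_def using finEI \<open>finite R2\<close> by auto
  have cP: "card P = card (E``Y) + card R2" unfolding P_def
    using card_Un_disjoint[OF finP1 disj] cP1 cP2 by simp
  have m: "ismatch rs k L P"
    unfolding ismatch_def
  proof (intro conjI)
    show "P \<subseteq> {0..<k} \<times> L" using g(2) f(2) unfolding P_def P1_def P2_def E1_def E2_def E_def R2_def by auto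
    show "\<forall>(r,c)\<in>P. c \<in> rs ! r" using g(2) f(2) unfolding P_def P1_def P2_def E1_def E2_def E_def by auto
    show "inj_on fst P"
    proof (rule inj_onI)
      fix p q assume pq: "p \<in> P" "q \<in> P" "fst p = fst q"
      show "p = q"
      proof (cases "p \<in> P1"; cases "q \<in> P1")
        assume "p \<in> P1" "q \<in> P1"
        then obtain c c' where "c \<in> E``Y" "c' \<in> E``Y" "p = (g c, c)" "q = (g c', c')" unfolding P1_def by auto
        then show ?thesis using pq g(1) by (auto dest: inj_onD)
      next
        assume a: "p \<in> P1" "q \<notin> P1"
        then obtain c r where "c \<in> E``Y" "r \<in> R2" "p = (g c, c)" "q = (r, f r)" using pq unfolding P_def P1_def P2_def by auto
        then show ?thesis using pq g(2) unfolding E1_def R2_def by auto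
      next
        assume a: "p \<notin> P1" "q \<in> P1"
        then obtain c r where "c \<in> E``Y" "r \<in> R2" "q = (g c, c)" "p = (r, f r)" using pq unfolding P_def P1_def P2_def by auto
        then show ?thesis using pq g(2) unfolding E1_def R2_def by auto
      next
        assume "p \<notin> P1" "q \<notin> P1"
        then have "p \<in> P2" "q \<in> P2" using pq P_def by auto
        then show ?thesis using pq unfolding P2_def by auto
      qed
    qed
    show "inj_on snd P"
    proof (rule inj_onI)
      fix p q assume pq: "p \<in> P" "q \<in> P" "snd p = snd q"
      show "p = q"
      proof (cases "p \<in> P1"; cases "q \<in> P1")
        assume "p \<in> P1" "q \<in> P1"
        then show ?thesis using pq unfolding P1_def by auto
      next
        assume a: "p \<in> P1" "q \<notin> P1"
        then obtain c r where "c \<in> E``Y" "r \<in> R2" "p = (g c, c)" "q = (r, f r)" using pq unfolding P_def P1_def P2_def by auto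
        then show ?thesis using pq f(2) unfolding E2_def by auto
      next
        assume a: "p \<notin> P1" "q \<in> P1"
        then obtain c r where "c \<in> E``Y" "r \<in> R2" "q = (g c, c)" "p = (r, f r)" using pq unfolding P_def P1_def P2_def by auto
        then show ?thesis using pq f(2) unfolding E2_def by auto
      next
        assume "p \<notin> P1" "q \<notin> P1"
        then have "p \<in> P2" "q \<in> P2" using pq P_def by auto
        then obtain r r' where "r \<in> R2" "r' \<in> R2" "p = (r, f r)" "q = (r', f r')" unfolding P2_def by auto
        then show ?thesis using pq f(1) by (auto dest: inj_onD)
      qed
    qed
  qed
  have "card R2 = k - card Y" unfolding R2_def using Y(1) by (simp add: card_Diff_subset finite_subset)
  then have "card P = dff rs k L Y" using cP EY[OF Y(1)] unfolding dff_def by simp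
  then show ?thesis using mcm_lb[OF L m] Y(1) by auto
qed



lemma NB_mono: "X \<subseteq> Y \<Longrightarrow> NB rs X \<subseteq> NB rs Y"
  unfolding NB_def by auto

lemma NB_sub: "(\<forall>j\<in>X. rs!j \<subseteq> V) \<Longrightarrow> NB rs X \<subseteq> V"
  unfolding NB_def by auto

lemma decode:
  fixes rs :: "nat set list" and V :: "nat set" and Aw :: "nat set"
  assumes V: "finite V" and rsV: "\<forall>j<k. rs!j \<subseteq> V"
    and w: "w \<in> V" "w \<notin> Aw" and AwV: "Aw \<subseteq> V"
    and X: "X \<subseteq> {0..<k}" "X \<noteq> {}"
    and cov: "insert w Aw \<subseteq> NB rs X"
    and cX: "card (NB rs X) = card X + d"
    and dle: "d \<le> card Aw"
    and exp: "\<forall>S\<subseteq>X. S \<noteq> {} \<longrightarrow> card S + d \<le> card (NB rs S)"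
  shows "mcm rs k (insert w (V - (Aw \<union> {w}))) = mcm rs k (V - (Aw \<union> {w})) + 1"
proof -
  define B where "B = V - (Aw \<union> {w})"
  define C where "C = V - Aw"
  have CB: "insert w B = C" unfolding B_def C_def using w by auto
  have finB: "finite B" "finite C" using V B_def C_def by auto
  have NBV: "NB rs Y \<subseteq> V" if "Y \<subseteq> {0..<k}" for Y
    using that rsV unfolding NB_def by fastforce
  have finNB: "finite (NB rs Y)" if "Y \<subseteq> {0..<k}" for Y
    using NBV[OF that] V finite_subset by blast
  have finX: "finite X" using X(1) finite_subset by blast
  have cardk: "card Y \<le> k" if "Y \<subseteq> {0..<k}" for Y
    using that by (metis card_atLeastLessThan card_mono finite_atLeastLessThan diff_zero)
  obtain Y where Y: "Y \<subseteq> {0..<k}" "dff rs k C Y \<le> mcm rs k C"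
    using konig[OF finB(2)] by blast
  define Z where "Z = Y \<union> X"
  define S where "S = Y \<inter> X"
  have Zk: "Z \<subseteq> {0..<k}" using Y(1) X(1) Z_def by auto
  have finY: "finite Y" using Y(1) finite_subset by blast
  have cZS: "card Z + card S = card Y + card X" unfolding Z_def S_def
    using card_Un_Int[OF finY finX] by simp
  have NBZ: "NB rs Z = NB rs Y \<union> NB rs X" unfolding Z_def NB_def by auto
  have finNY: "finite (NB rs Y \<inter> C)" "finite (NB rs X \<inter> C)" using finB by auto
  have c1: "card (NB rs Z \<inter> C) + card (NB rs Y \<inter> NB rs X \<inter> C) = card (NB rs Y \<inter> C) + card (NB rs X \<inter> C)"
  proof -
    have "NB rs Z \<inter> C = (NB rs Y \<inter> C) \<union> (NB rs X \<inter> C)" using NBZ by auto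
    moreover have "NB rs Y \<inter> NB rs X \<inter> C = (NB rs Y \<inter> C) \<inter> (NB rs X \<inter> C)" by auto
    ultimately show ?thesis using card_Un_Int[OF finNY] by simp
  qed
  have NBXC: "NB rs X \<inter> C = NB rs X - Aw" unfolding C_def using NBV[OF X(1)] by auto
  have c2: "card (NB rs X \<inter> C) + card Aw = card X + d"
    using NBXC cX cov card_Diff_subset[of Aw "NB rs X"] finNB[OF X(1)] AwV V
    by (metis (no_types, lifting) card_mono finite_subset insert_subset le_add_diff_inverse2)
  have Sk: "S \<subseteq> {0..<k}" using S_def Y(1) by auto
  have c3: "card S + d \<le> card (NB rs Y \<inter> NB rs X \<inter> C) + card Aw"
  proof (cases "S = {}")
    case True then show ?thesis using dle by simp
  next
    case False
    have "S \<subseteq> X" using S_def by auto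
    then have e: "card S + d \<le> card (NB rs S)" using exp False by blast
    have "NB rs S - Aw \<subseteq> NB rs Y \<inter> NB rs X \<inter> C"
      using NB_mono[of S Y rs] NB_mono[of S X rs] NBV[OF Sk] unfolding S_def C_def by auto
    then have "card (NB rs S - Aw) \<le> card (NB rs Y \<inter> NB rs X \<inter> C)"
      using finB(2) by (meson card_mono finite_Int)
    moreover have "card (NB rs S) \<le> card (NB rs S - Aw) + card Aw"
    proof -
      have fA: "finite Aw" using AwV V finite_subset by blast
      have "NB rs S \<subseteq> (NB rs S - Aw) \<union> Aw" by auto
      then have "card (NB rs S) \<le> card ((NB rs S - Aw) \<union> Aw)"
        using fA finNB[OF Sk] by (intro card_mono) auto
      also have "\<dots> \<le> card (NB rs S - Aw) + card Aw" by (rule card_Un_le)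
      finally show ?thesis .
    qed
    ultimately show ?thesis using e by simp
  qed
  have "dff rs k C Z \<le> dff rs k C Y"
    unfolding dff_def using c1 c2 c3 cZS cardk[OF Zk] cardk[OF Y(1)] by linarith
  moreover have "w \<in> NB rs Z" using cov NBZ by auto
  then have "NB rs Z \<inter> C = insert w (NB rs Z \<inter> B)" "w \<notin> NB rs Z \<inter> B"
    using CB B_def by auto
  then have "card (NB rs Z \<inter> C) = card (NB rs Z \<inter> B) + 1" using finB by simp
  then have "dff rs k B Z + 1 = dff rs k C Z" unfolding dff_def using cardk[OF Zk] by simp
  moreover have "mcm rs k B \<le> dff rs k B Z" by (rule mcm_le_dff[OF finB(1) Zk])
  ultimately have ge: "mcm rs k B + 1 \<le> mcm rs k C" using Y(2) by linarith
  obtain Y2 where Y2: "Y2 \<subseteq> {0..<k}" "dff rs k B Y2 \<le> mcm rs k B"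
    using konig[OF finB(1)] by blast
  have m1: "mcm rs k C \<le> dff rs k C Y2" by (rule mcm_le_dff[OF finB(2) Y2(1)])
  have sub: "NB rs Y2 \<inter> C \<subseteq> insert w (NB rs Y2 \<inter> B)" using CB by auto
  have cc: "card (NB rs Y2 \<inter> C) \<le> card (NB rs Y2 \<inter> B) + 1"
  proof -
    have "card (NB rs Y2 \<inter> C) \<le> card (insert w (NB rs Y2 \<inter> B))"
      using finB sub by (intro card_mono) auto
    also have "\<dots> \<le> card (NB rs Y2 \<inter> B) + 1" using finB by (simp add: card_insert_if)
    finally show ?thesis .
  qed
  have m2: "dff rs k C Y2 \<le> dff rs k B Y2 + 1" unfolding dff_def using cc cardk[OF Y2(1)] by simp
  have "mcm rs k C \<le> mcm rs k B + 1" using m1 m2 Y2(2) by linarith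
  then show ?thesis using ge CB B_def by simp
qed



lemma NB_append:
  assumes "Y \<subseteq> {0..<length rs}" shows "NB (rs @ [r]) Y = NB rs Y"
proof -
  have "\<And>j. j \<in> Y \<Longrightarrow> (rs @ [r]) ! j = rs ! j" using assms by (auto simp: nth_append)
  then show ?thesis unfolding NB_def by (rule SUP_cong[OF refl])
qed

lemma inv:
  assumes "umcd_exec A V N rows" "finite V" "\<forall>i\<in>V. i \<notin> A i"
  shows "N \<subseteq> V \<and> (\<forall>j<length rows. rows!j \<subseteq> V) \<and>
    (rows \<noteq> [] \<longrightarrow> (\<forall>i\<in>N. mcm rows (length rows) (insert i (V - (A i \<union> {i})))
        \<noteq> mcm rows (length rows) (V - (A i \<union> {i})) + 1)) \<and>
    (\<forall>X. X \<subseteq> {0..<length rows} \<longrightarrow> X \<noteq> {} \<longrightarrow>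
        card X + (MIN i\<in>V. card (V \<inter> A i)) \<le> card (NB rows X))"
  using assms(1)
proof induction
  case init
  then show ?case by auto
next
  case (step N rows w rows' N')
  define d where "d = (MIN i\<in>V. card (V \<inter> A i))"
  define k where "k = length rows"
  define r where "r = insert w (A w \<inter> V)"
  have IH1: "N \<subseteq> V" and IH2: "\<forall>j<k. rows!j \<subseteq> V"
    and IH3: "rows \<noteq> [] \<Longrightarrow> \<forall>i\<in>N. mcm rows k (insert i (V - (A i \<union> {i})))
        \<noteq> mcm rows k (V - (A i \<union> {i})) + 1"
    and IH4: "\<And>X. X \<subseteq> {0..<k} \<Longrightarrow> X \<noteq> {} \<Longrightarrow> card X + d \<le> card (NB rows X)"
    using step.IH unfolding d_def k_def by auto
  have wV: "w \<in> V" using step.hyps(3) IH1 by auto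
  have wA: "w \<notin> A w" using wV assms(3) by auto
  have rows': "rows' = rows @ [r]" using step.hyps(5) r_def by simp
  have lk: "length rows' = Suc k" using rows' k_def by simp
  have dle: "d \<le> card (A w \<inter> V)" unfolding d_def using wV assms(2)
    by (metis (no_types, lifting) Int_commute Min_le finite_imageI image_eqI)
  have finAw: "finite (A w \<inter> V)" using assms(2) by simp
  have cr: "card r = card (A w \<inter> V) + 1" unfolding r_def using wA finAw by simp
  have rV: "r \<subseteq> V" unfolding r_def using wV by auto
  have P1: "N' \<subseteq> V" using step.hyps(6) IH1 by auto
  have P2: "\<forall>j<length rows'. rows'!j \<subseteq> V"
    using IH2 rV unfolding rows' k_def by (auto simp: nth_append)
  have P3: "rows' \<noteq> [] \<longrightarrow> (\<forall>i\<in>N'. mcm rows' (length rows') (insert i (V - (A i \<union> {i})))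
        \<noteq> mcm rows' (length rows') (V - (A i \<union> {i})) + 1)"
    using step.hyps(6) by auto
  have P4: "card X + d \<le> card (NB rows' X)" if X: "X \<subseteq> {0..<length rows'}" "X \<noteq> {}" for X
  proof (cases "k \<in> X")
    case False
    have "X \<subseteq> {0..<k}"
    proof
      fix x assume "x \<in> X"
      then have "x < Suc k" "x \<noteq> k" using X lk False by auto
      then show "x \<in> {0..<k}" by simp
    qed
    then show ?thesis using IH4[of X] X(2) NB_append[of X rows r] k_def rows' by simp
  next
    case True
    define X' where "X' = X - {k}"
    have X'k: "X' \<subseteq> {0..<k}" using X lk X'_def by auto
    have NBX: "NB rows' X = NB rows X' \<union> r"
    proof -
      have "X = insert k X'" using True X'_def by auto
      then have "NB rows' X = rows'!k \<union> NB rows' X'" unfolding NB_def by auto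
      also have "rows'!k = r" using rows' k_def by simp
      also have "NB rows' X' = NB rows X'" using NB_append[OF X'k[unfolded k_def]] rows' by simp
      finally show ?thesis by auto
    qed
    have finX': "finite X'" using X'k finite_subset by blast
    have cX: "card X = card X' + 1" using True X'_def finX'
      by (metis Suc_eq_plus1 card_insert_disjoint insert_Diff Diff_iff singletonI)
    have NBV: "NB rows X' \<subseteq> V" using IH2 X'k unfolding NB_def by fastforce
    have finNB: "finite (NB rows X')" using NBV assms(2) finite_subset by blast
    show ?thesis
    proof (cases "X' = {}")
      case True
      then have "NB rows' X = r" using NBX unfolding NB_def by simp
      then show ?thesis using cX True cr dle by simp
    next
      case X'ne: False
      have e: "card X' + d \<le> card (NB rows X')" using IH4[OF X'k X'ne] .
      show ?thesis
      proof (rule ccontr)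
        assume neg: "\<not> card X + d \<le> card (NB rows' X)"
        have "card (NB rows X') \<le> card (NB rows X' \<union> r)"
          using finNB rV assms(2) by (intro card_mono) (auto intro: finite_subset)
        then have eq: "card (NB rows X' \<union> r) = card (NB rows X')" and eq2: "card (NB rows X') = card X' + d"
          using neg e cX NBX by auto
        have "NB rows X' = NB rows X' \<union> r"
          using eq finNB rV assms(2) by (intro card_subset_eq) (auto intro: finite_subset)
        then have cov: "r \<subseteq> NB rows X'" by auto
        have rne: "rows \<noteq> []" using X'k X'ne k_def by auto
        have exp: "\<forall>S\<subseteq>X'. S \<noteq> {} \<longrightarrow> card S + d \<le> card (NB rows S)"
          using IH4 X'k by auto
        have dec: "mcm rows k (insert w (V - ((A w \<inter> V) \<union> {w}))) = mcm rows k (V - ((A w \<inter> V) \<union> {w})) + 1"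
          by (rule decode[OF assms(2) IH2 wV _ _ X'k X'ne cov[unfolded r_def] eq2 dle exp])
             (use wA in auto)
        moreover have "V - ((A w \<inter> V) \<union> {w}) = V - (A w \<union> {w})" by auto
        ultimately show False using IH3[OF rne] step.hyps(3) by simp
      qed
    qed
  qed
  show ?case using P1 P2 P3 P4 unfolding d_def by blast
qed

lemma umcd_le_mds:
  assumes "umcd_output A M K" "finite M" "M \<noteq> {}" "\<forall>i\<in>M. i \<notin> A i"
  shows "K \<le> beta_mds A M"
proof -
  obtain rows where r: "umcd_exec A M {} rows" "length rows = K"
    using assms(1) unfolding umcd_output_def by blast
  note I = inv[OF r(1) assms(2) assms(4)]
  show ?thesis
  proof (cases "K = 0")
    case True then show ?thesis by simp
  next
    case False
    have "card {0..<K} + (MIN i\<in>M. card (M \<inter> A i)) \<le> card (NB rows {0..<K})"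
      using I False r(2) by auto
    moreover have "NB rows {0..<K} \<subseteq> M" using I r(2) unfolding NB_def by auto
    then have "card (NB rows {0..<K}) \<le> card M" using assms(2) by (simp add: card_mono)
    ultimately show ?thesis unfolding beta_mds_def by simp
  qed
qed



lemma part_sub: "is_partition S P \<Longrightarrow> P \<subseteq> Pow S"
  unfolding is_partition_def by auto

theorem proposition12:
  fixes m :: nat and A :: "nat \<Rightarrow> nat set" and f :: "nat set \<Rightarrow> nat"
  assumes side_info: "\<forall>i\<in>{1..m}. A i \<subseteq> {1..m} - {i}"
    and fixed_exec: "\<forall>M. M \<subseteq> {1..m} \<and> M \<noteq> {} \<longrightarrow> umcd_output A M (f M)"
  shows "beta_pumcd m f \<le> beta_pcc m A"
proof -
  define SP where "SP = {(\<Sum>M\<in>P. beta_mds A M) | P. is_partition {1..m} P}"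
  define SF where "SF = {(\<Sum>M\<in>P. f M) | P. is_partition {1..m} P}"
  have "SP \<subseteq> (\<lambda>P. \<Sum>M\<in>P. beta_mds A M) ` Pow (Pow {1..m})"
    unfolding SP_def using part_sub by blast
  then have finSP: "finite SP" by (rule finite_subset) auto
  have "SF \<subseteq> (\<lambda>P. \<Sum>M\<in>P. f M) ` Pow (Pow {1..m})"
    unfolding SF_def using part_sub by blast
  then have finSF: "finite SF" by (rule finite_subset) auto
  have "is_partition {1..m} ((\<lambda>i. {i}) ` {1..m})" unfolding is_partition_def by auto
  then have "SP \<noteq> {}" unfolding SP_def by blast
  then have "Min SP \<in> SP" using finSP by simp
  then obtain P where P: "is_partition {1..m} P" "beta_pcc m A = (\<Sum>M\<in>P. beta_mds A M)"
    unfolding SP_def beta_pcc_def by auto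
  have "beta_pumcd m f \<le> (\<Sum>M\<in>P. f M)"
    unfolding beta_pumcd_def using finSF P(1) unfolding SF_def by (intro Min_le) auto
  also have "\<dots> \<le> (\<Sum>M\<in>P. beta_mds A M)"
  proof (rule sum_mono)
    fix M assume M: "M \<in> P"
    have sub: "M \<subseteq> {1..m}" "M \<noteq> {}" using P(1) M unfolding is_partition_def by auto
    have "umcd_output A M (f M)" using fixed_exec sub by blast
    moreover have "\<forall>i\<in>M. i \<notin> A i" using side_info sub by blast
    ultimately show "f M \<le> beta_mds A M"
      using umcd_le_mds sub finite_subset[OF sub(1)] by blast
  qed
  finally show ?thesis using P(2) by simp
qed


end
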